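(* Consider the hard core model with a fixed vertex activity $\lambda>0$, let $\phi(x)=\sinh^{-1}(\sqrt x)$, so $\Phi(x)=\phi'(x)=\frac{1}{2\sqrt{x(1+x)}}$, and let $d$ be a positive integer. Let $\xi(d)=\sup_{x\ge0}\Xi(d,x)$ where $\Xi(d,x)=d\left(\frac{\Phi(f_{d,\lambda}(x))f_{d,\lambda}(x)}{(1+x)\Phi(x)}\right)^2$ and $f_{d,\lambda}(x)=\lambda/(1+x)^d$. Then the equation $d\,x=1+f_{d,\lambda}(x)$ has a unique positive solution $\tilde x_\lambda(d)$, and $\xi(d)=\Xi(d,\tilde x_\lambda(d))$. *)

theory Defs
  imports Complex_Main
begin

definition hc_phi :: "real \<Rightarrow> real" where
  "hc_phi x = arsinh (sqrt x)"

definition hc_Phi :: "real \<Rightarrow> real" where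
  "hc_Phi x = 1 / (2 * sqrt (x * (1 + x)))"

definition hc_f :: "real \<Rightarrow> nat \<Rightarrow> real \<Rightarrow> real" where
  "hc_f lam d x = lam / (1 + x) ^ d"

definition hc_Xi :: "real \<Rightarrow> nat \<Rightarrow> real \<Rightarrow> real" where
  "hc_Xi lam d x = real d * ((hc_Phi (hc_f lam d x) * hc_f lam d x) / ((1 + x) * hc_Phi x)) ^ 2"

definition hc_xi :: "real \<Rightarrow> nat \<Rightarrow> real" where
  "hc_xi lam d = (SUP x\<in>{0..}. hc_Xi lam d x)"

end

theory Submission
  imports Defs
begin

lemma Phi_sq: "x \<ge> 0 \<Longrightarrow> (hc_Phi x)^2 = 1 / (4 * x * (1 + x))"
  unfolding hc_Phi_def by (simp add: power_divide power_mult_distrib)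

lemma alg: "(F::real)>0 \<Longrightarrow> x>0 \<Longrightarrow> (1/(4*F*(1+F)))*F^2/((1+x)^2*(1/(4*x*(1+x)))) = F*x/((1+F)*(1+x))"
  by (simp add: divide_simps power2_eq_square)

definition G :: "real \<Rightarrow> nat \<Rightarrow> real \<Rightarrow> real" where
  "G lam d x = lam * x / ((1 + x) * ((1 + x)^d + lam))"

lemma Xi_eq:
  assumes "lam > 0" "x \<ge> 0"
  shows "hc_Xi lam d x = real d * G lam d x"
proof (cases "x = 0")
  case True
  then show ?thesis by (simp add: hc_Xi_def hc_Phi_def G_def)
next
  case False
  hence x: "x > 0" using assms by simp
  have fp: "hc_f lam d x > 0" using assms x unfolding hc_f_def by simp
  have "((hc_Phi (hc_f lam d x) * hc_f lam d x) / ((1 + x) * hc_Phi x)) ^ 2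
      = (hc_Phi (hc_f lam d x))^2 * (hc_f lam d x)^2 / ((1 + x)^2 * (hc_Phi x)^2)"
    by (simp add: power_divide power_mult_distrib)
  also have "\<dots> = (1 / (4 * hc_f lam d x * (1 + hc_f lam d x))) * (hc_f lam d x)^2
         / ((1 + x)^2 * (1 / (4 * x * (1 + x))))"
    using fp x by (simp add: Phi_sq)
  also have "\<dots> = hc_f lam d x * x / ((1 + hc_f lam d x) * (1 + x))"
    using alg[OF fp x] by simp
  also have "\<dots> = G lam d x"
  proof -
    have p: "(1+x)^d > 0" using x by simp
    have "hc_f lam d x / (1 + hc_f lam d x) = lam / ((1+x)^d + lam)"
      unfolding hc_f_def using p assms by (simp add: field_simps)
    thus ?thesis unfolding G_def by (metis (no_types, lifting) times_divide_times_eq mult.commute)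
  qed
  finally show ?thesis by (simp add: hc_Xi_def)
qed

lemma f_anti: "lam > 0 \<Longrightarrow> 0 \<le> x \<Longrightarrow> x \<le> y \<Longrightarrow> hc_f lam d y \<le> hc_f lam d x"
  unfolding hc_f_def
  by (intro divide_left_mono power_mono mult_pos_pos) auto

lemma f_strict: "lam > 0 \<Longrightarrow> d \<ge> 1 \<Longrightarrow> 0 \<le> x \<Longrightarrow> x < y \<Longrightarrow> hc_f lam d y < hc_f lam d x"
  unfolding hc_f_def
  apply (rule divide_strict_left_mono)
    apply (rule power_strict_mono) apply auto
  done

lemma G_deriv:
  assumes "lam > 0" "x \<ge> 0" "d = Suc m"
  shows "DERIV (G lam d) x :> lam * ((1+x)^d * (1 + hc_f lam d x - real d * x))
           / (((1 + x) * ((1 + x)^d + lam))^2)"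
proof -
  have pos: "(1 + x) * ((1 + x)^d + lam) > 0" using assms by (simp add: add_pos_pos)
  have D: "DERIV (\<lambda>x. (1 + x) * ((1 + x)^d + lam)) x :>
      ((1 + x)^d + lam) + (1+x) * (real d * (1+x)^m)"
  proof -
    have P: "DERIV (\<lambda>x. (1 + x)^d) x :> real d * (1+x)^m"
    proof -
      have "DERIV (\<lambda>x. (1 + x)^Suc m) x :> (1 + real m) * (1 * (1+x)^m)"
        by (rule DERIV_power_Suc) (auto intro!: derivative_eq_intros)
      thus ?thesis using assms(3) by simp
    qed
    have P2: "DERIV (\<lambda>x. (1 + x)^d + lam) x :> real d * (1+x)^m + 0"
      by (rule DERIV_add[OF P DERIV_const])
    have H: "DERIV (\<lambda>x. (1 + x) * ((1 + x)^d + lam)) x :> (1+x) * (real d * (1+x)^m + 0) + 1 * ((1 + x)^d + lam)"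
      by (rule DERIV_mult'[OF _ P2]) (auto intro!: derivative_eq_intros)
    show ?thesis using H by (simp add: algebra_simps)
  qed
  have "DERIV (\<lambda>x. lam * x / ((1 + x) * ((1 + x)^d + lam))) x :>
     (lam * ((1 + x) * ((1 + x)^d + lam)) - lam * x * (((1 + x)^d + lam) + (1+x) * (real d * (1+x)^m)))
       / (((1 + x) * ((1 + x)^d + lam)) * ((1 + x) * ((1 + x)^d + lam)))"
    by (rule DERIV_divide[OF _ D]) (use pos in \<open>auto intro!: derivative_eq_intros\<close>)
  moreover have "(lam * ((1 + x) * ((1 + x)^d + lam)) - lam * x * (((1 + x)^d + lam) + (1+x) * (real d * (1+x)^m)))
      = lam * ((1+x)^d * (1 + hc_f lam d x - real d * x))"
  proof -
    have nz: "(1+x)^d \<noteq> 0" using assms by simp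
    have "(1+x)^d * (1 + hc_f lam d x - real d * x) = (1+x)^d + lam - real d * x * (1+x)^d"
      unfolding hc_f_def using nz by (simp add: algebra_simps)
    moreover have "(1+x)^d = (1+x) * (1+x)^m" using assms(3) by simp
    ultimately show ?thesis by (simp add: algebra_simps)
  qed
  ultimately show ?thesis unfolding G_def by (simp add: power2_eq_square)
qed

theorem lemma4p2:
  fixes lam :: real and d :: nat
  assumes "lam > 0" and "d \<ge> 1"
  shows "(\<exists>!x. x > 0 \<and> real d * x = 1 + hc_f lam d x)
       \<and> (\<forall>x. x > 0 \<and> real d * x = 1 + hc_f lam d x \<longrightarrow> hc_xi lam d = hc_Xi lam d x)"
proof -
  obtain m where dm: "d = Suc m" using assms(2) by (cases d) auto
  define h where "h x = real d * x - hc_f lam d x" for x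
  have cont: "isCont h x" if "x \<ge> 0" for x
    using that assms unfolding h_def hc_f_def
    by (auto intro!: continuous_intros simp: add_pos_nonneg)
  have h0: "h 0 \<le> 1" using assms unfolding h_def hc_f_def by simp
  have b: "(1 + lam) / real d \<ge> 0" using assms by simp
  have "hc_f lam d ((1 + lam) / real d) \<le> lam"
    using f_anti[OF assms(1) order_refl b] by (simp add: hc_f_def)
  hence h1: "1 \<le> h ((1 + lam) / real d)" using assms unfolding h_def by simp
  obtain x0 where x0: "x0 \<ge> 0" "h x0 = 1"
    using IVT[of h 0 1 "(1 + lam) / real d"] h0 h1 b cont by auto
  have "x0 \<noteq> 0" using x0 assms unfolding h_def hc_f_def by auto
  hence x0p: "x0 > 0" using x0 by simp
  have root: "real d * x0 = 1 + hc_f lam d x0" using x0 unfolding h_def by simp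
  have uniq: "y = x0" if "y > 0" "real d * y = 1 + hc_f lam d y" for y
  proof (rule ccontr)
    assume "y \<noteq> x0"
    hence "y < x0 \<or> x0 < y" by auto
    thus False
    proof
      assume "y < x0"
      moreover have "real d * y < real d * x0" using \<open>y < x0\<close> assms by simp
      ultimately have "hc_f lam d x0 < hc_f lam d y" "real d * y < real d * x0"
        using f_strict[OF assms, of y x0] that assms by auto
      thus False using that root by linarith
    next
      assume "x0 < y"
      hence "hc_f lam d y < hc_f lam d x0" "real d * x0 < real d * y"
        using f_strict[OF assms, of x0 y] x0p assms by auto
      thus False using that root by linarith
    qed
  qed
  have le: "G lam d x \<le> G lam d x0" if "x \<ge> 0" for x
  proof (cases "x \<le> x0")
    case True
    show ?thesis
    proof (rule DERIV_nonneg_imp_nondecreasing[OF True])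
      fix t assume t1: "x \<le> t" and t2: "t \<le> x0"
      have t: "x \<le> t \<and> t \<le> x0" using t1 t2 by simp
      have "hc_f lam d x0 \<le> hc_f lam d t" using f_anti[OF assms(1), of t x0] t that by auto
      hence "0 \<le> 1 + hc_f lam d t - real d * t" using root t assms
        by (smt (verit) mult_left_mono of_nat_0_le_iff)
      hence "0 \<le> lam * ((1+t)^d * (1 + hc_f lam d t - real d * t))
           / (((1 + t) * ((1 + t)^d + lam))^2)"
        using assms t that by (auto intro!: divide_nonneg_pos mult_nonneg_nonneg)
      thus "\<exists>y. DERIV (G lam d) t :> y \<and> 0 \<le> y"
        using G_deriv[OF assms(1) _ dm, of t] t that by auto
    qed
  next
    case False
    hence F: "x0 \<le> x" by simp
    show ?thesis
    proof (rule DERIV_nonpos_imp_nonincreasing[OF F])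
      fix t assume t1: "x0 \<le> t" and t2: "t \<le> x"
      have t: "x0 \<le> t \<and> t \<le> x" using t1 t2 by simp
      have "hc_f lam d t \<le> hc_f lam d x0" using f_anti[OF assms(1), of x0 t] t x0 by auto
      hence "1 + hc_f lam d t - real d * t \<le> 0" using root t assms
        by (smt (verit) mult_left_mono of_nat_0_le_iff)
      hence "lam * ((1+t)^d * (1 + hc_f lam d t - real d * t))
           / (((1 + t) * ((1 + t)^d + lam))^2) \<le> 0"
        using assms t x0 by (auto intro!: divide_nonpos_nonneg mult_nonneg_nonpos)
      thus "\<exists>y. DERIV (G lam d) t :> y \<and> y \<le> 0"
        using G_deriv[OF assms(1) _ dm, of t] t x0 by auto
    qed
  qed
  have sup: "hc_xi lam d = hc_Xi lam d x0"
    unfolding hc_xi_def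
  proof (rule cSup_eq_maximum)
    show "hc_Xi lam d x0 \<in> hc_Xi lam d ` {0..}" using x0 by auto
    fix y assume "y \<in> hc_Xi lam d ` {0..}"
    then show "y \<le> hc_Xi lam d x0"
      using le Xi_eq[OF assms(1)] x0 by (auto intro!: mult_left_mono)
  qed
  show ?thesis
    using root x0p uniq sup by blast
qed

end
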